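(* Under the hypotheses and notation of the context, if $\sigma_k\ge\kappa_r\alpha$ for all $k\ge0$, then $$\|z^{k+1}-z^k\|_M\le C\min_{0\le j\le k}\rho^{k-j}\|z^{j+1}-z^j\|_M\quad\text{for all }k\ge0.$$
   Context: $X$ is a finite-dimensional real Hilbert space; $T:X\rightrightarrows X$ is maximal monotone with $\Omega:=T^{-1}(0)\neq\emptyset$. $M$ is self-adjoint positive definite with $\lambda_{\max}(M)=1$; $\|z\|_M=\sqrt{\langle z,Mz\rangle}$, $\operatorname{dist}_M(z,D)=\min_{d\in D}\|d-z\|_M$, $\operatorname{dist}=\operatorname{dist}_I$. $\mathcal{J}_{\sigma M^{-1}T}:=(I+\sigma M^{-1}T)^{-1}$. $z^+$ is an output of IGPPAstep$(z,\sigma,\eta,\delta,\gamma,M)$ if $z^+=\gamma w+(1-\gamma)z$ for some $w$ with $\|w-\mathcal{J}_{\sigma M^{-1}T}(z)\|_M\le\min\{\eta,\delta\|w-z\|_M\}$. Hypotheses: $T$ satisfies bounded metric subregularity (for every $r>0$ there is $\kappa_r>0$ with $\operatorname{dist}(z,\Omega)\le\kappa_r\operatorname{dist}(0,T(z))$ for all $\|z\|\le r$); $z^0\in X$, $\gamma\in(0,2)$, $\delta\in[0,1/2)$; $\{\sigma_k\},\{\eta_k\}$ nonnegative with $\sum_k\eta_k<\infty$, $\inf_k\sigma_k>0$; $z^{k+1}$ is an output of IGPPAstep$(z^k,\sigma_k,\eta_k,\delta,\gamma,M)$ for all $k$; $\bar z^0$ is a point of $\Omega$ nearest to $z^0$ in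 $\|\cdot\|_M$; $r\ge\|\bar z^0\|+\frac{1}{\lambda_{\min}(M)}(\operatorname{dist}_M(z^0,\Omega)+\gamma\sum_k\eta_k)$ and $\kappa_r$ is a subregularity constant at this $r$; $\alpha>0$ is such that $\rho:=\frac{1}{1-\delta}\Big(\sqrt{1-\frac{\min\{\gamma,2\gamma-\gamma^2\}\alpha^2}{\alpha^2+1}}+\delta\big(\frac{\min\{\gamma,1\}}{\sqrt{\alpha^2+1}}+1\big)\Big)<1$; $C:=\frac{1+\delta}{(1-\delta)(1-\sqrt{1/(\alpha^2+1)})}$. *)

theory Defs
  imports "HOL-Analysis.Analysis"
begin

definition monotone_op :: "('a::real_inner \<Rightarrow> 'a set) \<Rightarrow> bool" where
  "monotone_op T \<longleftrightarrow> (\<forall>x y u v. u \<in> T x \<longrightarrow> v \<in> T y \<longrightarrow> 0 \<le> (x - y) \<bullet> (u - v))"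

definition maximal_monotone :: "('a::real_inner \<Rightarrow> 'a set) \<Rightarrow> bool" where
  "maximal_monotone T \<longleftrightarrow> monotone_op T \<and>
     (\<forall>x u. (\<forall>y v. v \<in> T y \<longrightarrow> 0 \<le> (x - y) \<bullet> (u - v)) \<longrightarrow> u \<in> T x)"

definition zeros :: "('a::real_vector \<Rightarrow> 'a set) \<Rightarrow> 'a set" where
  "zeros T = {z. 0 \<in> T z}"

definition self_adjoint :: "('a::real_inner \<Rightarrow> 'a) \<Rightarrow> bool" where
  "self_adjoint M \<longleftrightarrow> linear M \<and> (\<forall>x y. M x \<bullet> y = x \<bullet> M y)"

definition pos_def :: "('a::real_inner \<Rightarrow> 'a) \<Rightarrow> bool" where
  "pos_def M \<longleftrightarrow> (\<forall>x. x \<noteq> 0 \<longrightarrow> 0 < x \<bullet> M x)"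

definition eigvals :: "('a::real_vector \<Rightarrow> 'a) \<Rightarrow> real set" where
  "eigvals M = {l. \<exists>v. v \<noteq> 0 \<and> M v = l *\<^sub>R v}"

definition lambda_max :: "('a::real_vector \<Rightarrow> 'a) \<Rightarrow> real" where
  "lambda_max M = Max (eigvals M)"

definition lambda_min :: "('a::real_vector \<Rightarrow> 'a) \<Rightarrow> real" where
  "lambda_min M = Min (eigvals M)"

definition normM :: "('a::real_inner \<Rightarrow> 'a) \<Rightarrow> 'a \<Rightarrow> real" where
  "normM M z = sqrt (z \<bullet> M z)"

definition distM :: "('a::real_inner \<Rightarrow> 'a) \<Rightarrow> 'a \<Rightarrow> 'a set \<Rightarrow> real" where
  "distM M z D = Inf ((\<lambda>d. normM M (d - z)) ` D)"

text \<open>Resolvent (I + \<sigma> M^{-1} T)^{-1}(z): the w with z \<in> w + \<sigma> M^{-1} T(w),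
  i.e. M (z - w) = \<sigma> u for some u \<in> T w.\<close>
definition resolvent :: "real \<Rightarrow> ('a::real_inner \<Rightarrow> 'a) \<Rightarrow> ('a \<Rightarrow> 'a set) \<Rightarrow> 'a \<Rightarrow> 'a" where
  "resolvent \<sigma> M T z = (THE w. \<exists>u \<in> T w. M (z - w) = \<sigma> *\<^sub>R u)"

definition IGPPAstep_out ::
  "('a::real_inner \<Rightarrow> 'a set) \<Rightarrow> 'a \<Rightarrow> 'a \<Rightarrow> real \<Rightarrow> real \<Rightarrow> real \<Rightarrow> real \<Rightarrow> ('a \<Rightarrow> 'a) \<Rightarrow> bool" where
  "IGPPAstep_out T zplus z \<sigma> \<eta> \<delta> \<gamma> M \<longleftrightarrow>
     (\<exists>w. zplus = \<gamma> *\<^sub>R w + (1 - \<gamma>) *\<^sub>R z \<and>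
          normM M (w - resolvent \<sigma> M T z) \<le> min \<eta> (\<delta> * normM M (w - z)))"

text \<open>dist(0, T z) = +\<infinity> when T z = {}; then the inequality is vacuous.\<close>
definition subreg_const :: "('a::euclidean_space \<Rightarrow> 'a set) \<Rightarrow> real \<Rightarrow> real \<Rightarrow> bool" where
  "subreg_const T r \<kappa> \<longleftrightarrow> 0 < \<kappa> \<and>
     (\<forall>z. norm z \<le> r \<longrightarrow> T z \<noteq> {} \<longrightarrow> infdist z (zeros T) \<le> \<kappa> * infdist 0 (T z))"

definition bounded_metric_subregular :: "('a::euclidean_space \<Rightarrow> 'a set) \<Rightarrow> bool" where
  "bounded_metric_subregular T \<longleftrightarrow> (\<forall>r>0. \<exists>\<kappa>. subreg_const T r \<kappa>)"

end

theory Submission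
  imports Defs
begin

context
  fixes M :: "'a::euclidean_space \<Rightarrow> 'a"
  assumes sa: "self_adjoint M" and pd: "pos_def M"
begin

lemma linM: "linear M" using sa unfolding self_adjoint_def by auto
lemma symM: "M x \<bullet> y = x \<bullet> M y" using sa unfolding self_adjoint_def by auto

lemma M_add: "M (x + y) = M x + M y" using linM by (rule linear_add)
lemma M_diff: "M (x - y) = M x - M y" using linM by (rule linear_diff)
lemma M_scale: "M (c *\<^sub>R x) = c *\<^sub>R M x" using linM by (rule linear_scale)
lemma M_neg: "M (- x) = - M x" using linM by (rule linear_neg)
lemma M_zero: "M 0 = 0" using linM by (rule linear_0)

lemma ip_nonneg: "0 \<le> x \<bullet> M x"
proof (cases "x = 0")
  case True then show ?thesis by (simp add: M_zero)
next
  case False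
  have "0 < x \<bullet> M x" using pd False unfolding pos_def_def by blast
  then show ?thesis by linarith
qed

lemma ip_zero: "x \<bullet> M x = 0 \<Longrightarrow> x = 0"
  using pd unfolding pos_def_def by force

lemma normM_sq: "(normM M x)^2 = x \<bullet> M x"
  unfolding normM_def using ip_nonneg by simp

lemma normM_nonneg: "0 \<le> normM M x"
  unfolding normM_def using ip_nonneg[of x] by simp

lemma normM_zero_iff: "normM M x = 0 \<longleftrightarrow> x = 0"
  unfolding normM_def using ip_zero by (auto simp: M_zero)

lemma ip_add_left: "(x + y) \<bullet> M z = x \<bullet> M z + y \<bullet> M z" by (simp add: inner_add_left)
lemma ip_add_right: "z \<bullet> M (x + y) = z \<bullet> M x + z \<bullet> M y" by (simp add: M_add inner_add_right)
lemma ip_diff_left: "(x - y) \<bullet> M z = x \<bullet> M z - y \<bullet> M z" by (simp add: inner_diff_left)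
lemma ip_diff_right: "z \<bullet> M (x - y) = z \<bullet> M x - z \<bullet> M y" by (simp add: M_diff inner_diff_right)
lemma ip_scale_left: "(c *\<^sub>R x) \<bullet> M z = c * (x \<bullet> M z)" by simp
lemma ip_scale_right: "z \<bullet> M (c *\<^sub>R x) = c * (z \<bullet> M x)" by (simp add: M_scale)
lemma ip_sym: "x \<bullet> M y = y \<bullet> M x" using symM[of y x] by (simp add: inner_commute)
lemma ip_neg_left: "(- x) \<bullet> M z = - (x \<bullet> M z)" by simp
lemma ip_neg_right: "z \<bullet> M (- x) = - (z \<bullet> M x)" by (simp add: M_neg)

lemmas ip_simps = ip_add_left ip_add_right ip_diff_left ip_diff_right ip_scale_left ip_scale_right
  ip_neg_left ip_neg_right

lemma ip_expand_add: "(x + y) \<bullet> M (x + y) = x \<bullet> M x + 2 * (x \<bullet> M y) + y \<bullet> M y"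
  by (simp add: ip_simps ip_sym[of y x])

lemma ip_expand_diff: "(x - y) \<bullet> M (x - y) = x \<bullet> M x - 2 * (x \<bullet> M y) + y \<bullet> M y"
  by (simp add: ip_simps ip_sym[of y x])

lemma ip_am: "2 * (x \<bullet> M y) \<le> x \<bullet> M x + y \<bullet> M y"
  using ip_nonneg[of "x - y"] ip_expand_diff[of x y] by linarith

lemma ip_cs: "x \<bullet> M y \<le> normM M x * normM M y"
proof (cases "x = 0 \<or> y = 0")
  case True then show ?thesis by (auto simp: M_zero normM_def)
next
  case False
  define a where "a = normM M x"
  define b where "b = normM M y"
  have a: "a > 0" using False normM_nonneg[of x] normM_zero_iff[of x] unfolding a_def by linarith
  have b: "b > 0" using False normM_nonneg[of y] normM_zero_iff[of y] unfolding b_def by linarith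
  have "2 * ((inverse a *\<^sub>R x) \<bullet> M (inverse b *\<^sub>R y)) \<le>
     (inverse a *\<^sub>R x) \<bullet> M (inverse a *\<^sub>R x) + (inverse b *\<^sub>R y) \<bullet> M (inverse b *\<^sub>R y)"
    by (rule ip_am)
  also have "\<dots> = 2"
  proof -
    have ax: "x \<bullet> M x = a * a" using normM_sq[of x] unfolding a_def by (simp add: power2_eq_square)
    have bx: "y \<bullet> M y = b * b" using normM_sq[of y] unfolding b_def by (simp add: power2_eq_square)
    show ?thesis using a b by (simp add: ip_simps ax bx field_simps)
  qed
  finally have "(x \<bullet> M y) / (a * b) \<le> 1"
    by (simp add: ip_simps field_simps)
  then show ?thesis using a b unfolding a_def b_def by (simp add: field_simps)
qed

lemma normM_triangle: "normM M (x + y) \<le> normM M x + normM M y"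
proof -
  have "(x + y) \<bullet> M (x + y) \<le> (normM M x + normM M y)^2"
    using ip_expand_add[of x y] ip_cs[of x y] normM_sq[of x] normM_sq[of y]
    by (simp add: power2_sum)
  then have "sqrt ((x + y) \<bullet> M (x + y)) \<le> sqrt ((normM M x + normM M y)^2)"
    by (rule real_sqrt_le_mono)
  then show ?thesis using normM_nonneg[of x] normM_nonneg[of y] by (simp add: normM_def)
qed

lemma normM_scale: "normM M (c *\<^sub>R x) = \<bar>c\<bar> * normM M x"
  unfolding normM_def by (simp add: ip_simps real_sqrt_mult mult.assoc[symmetric] power2_eq_square[symmetric])

lemma normM_neg: "normM M (- x) = normM M x"
  using normM_scale[of "-1" x] by simp

lemma normM_commute: "normM M (x - y) = normM M (y - x)"
  using normM_neg[of "x - y"] by simp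

lemma normM_triangle_diff: "normM M (x - z) \<le> normM M (x - y) + normM M (y - z)"
  using normM_triangle[of "x - y" "y - z"] by simp

lemma normM_le_sq: "normM M x \<le> normM M y \<longleftrightarrow> x \<bullet> M x \<le> y \<bullet> M y"
  unfolding normM_def by simp

end

lemma psd_kernel:
  fixes N :: "'a::real_inner \<Rightarrow> 'a"
  assumes lin: "linear N" and sym: "\<And>x y. N x \<bullet> y = x \<bullet> N y"
    and psd: "\<And>v. 0 \<le> v \<bullet> N v" and z: "v0 \<bullet> N v0 = 0"
  shows "N v0 = 0"
proof -
  define h where "h = N v0"
  define B where "B = h \<bullet> h"
  define c where "c = h \<bullet> N h"
  have c0: "0 \<le> c" unfolding c_def by (rule psd)
  have vh: "v0 \<bullet> N h = B" unfolding B_def h_def using sym[of v0 "N v0"] by simp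
  have hv: "h \<bullet> N v0 = B" unfolding B_def h_def by simp
  have exp: "(v0 + t *\<^sub>R h) \<bullet> N (v0 + t *\<^sub>R h) = 2 * t * B + t^2 * c" for t
    using z vh hv unfolding c_def
    by (simp add: linear_add[OF lin] linear_scale[OF lin] inner_add_left inner_add_right
        power2_eq_square algebra_simps)
  define t where "t = - B / (c + 1)"
  have "0 \<le> 2 * t * B + t^2 * c" using psd[of "v0 + t *\<^sub>R h"] exp[of t] by simp
  then have "0 \<le> (2 * t * B + t^2 * c) * (c+1)^2" using c0 by simp
  also have "(2 * t * B + t^2 * c) * (c+1)^2 = - (B^2) * (c + 2)"
  proof -
    have tc: "t * (c + 1) = - B" unfolding t_def using c0 by simp
    have "(2 * t * B + t^2 * c) * (c+1)^2 = 2 * B * (t * (c + 1)) * (c + 1) + c * (t * (c+1))^2"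
      by (simp add: power2_eq_square algebra_simps)
    also have "\<dots> = - (B^2) * (c + 2)" unfolding tc by (simp add: power2_eq_square algebra_simps)
    finally show ?thesis .
  qed
  finally have "B^2 * (c + 2) \<le> 0" by simp
  moreover have "0 \<le> B^2 * (c+2)" using c0 by simp
  ultimately have "B^2 * (c + 2) = 0" by linarith
  then have "B = 0" using c0 by simp
  then show ?thesis unfolding B_def h_def by simp
qed

context
  fixes M :: "'a::euclidean_space \<Rightarrow> 'a"
  assumes sa: "self_adjoint M" and pd: "pos_def M"
begin

lemma contM: "continuous_on S M"
  using linM[OF sa pd] unfolding linear_conv_bounded_linear by (rule linear_continuous_on)

lemma sphere_ne: "sphere (0::'a) 1 \<noteq> {}"
proof -
  obtain b :: 'a where "b \<in> Basis" using nonempty_Basis by blast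
  then have "b \<in> sphere 0 1" by simp
  then show ?thesis by blast
qed

lemma scale_to_sphere:
  assumes "\<And>u::'a. u \<in> sphere 0 1 \<Longrightarrow> P (u \<bullet> M u)"
    and P: "\<And>v::'a. v \<noteq> 0 \<Longrightarrow> P (v \<bullet> M v / (v \<bullet> v))"
  shows True by simp

lemma rayleigh_ext:
  assumes v: "v \<noteq> 0"
  shows "(inverse (norm v) *\<^sub>R v) \<in> sphere 0 1"
    and "(inverse (norm v) *\<^sub>R v) \<bullet> M (inverse (norm v) *\<^sub>R v) = (v \<bullet> M v) / (v \<bullet> v)"
proof -
  show "(inverse (norm v) *\<^sub>R v) \<in> sphere 0 1" using v by simp
  have "v \<bullet> v = (norm v)^2" by (simp add: power2_norm_eq_inner)
  then show "(inverse (norm v) *\<^sub>R v) \<bullet> M (inverse (norm v) *\<^sub>R v) = (v \<bullet> M v) / (v \<bullet> v)"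
    using v by (simp add: M_scale[OF sa pd] power2_eq_square field_simps)
qed

lemma eig_from_ext:
  assumes v0: "v0 \<in> sphere (0::'a) 1"
    and N: "N = (\<lambda>v. s *\<^sub>R (\<mu> *\<^sub>R v - M v))" and s: "s = 1 \<or> s = -1"
    and psd: "\<And>v. 0 \<le> v \<bullet> N v" and mu: "v0 \<bullet> M v0 = \<mu>"
  shows "M v0 = \<mu> *\<^sub>R v0"
proof -
  have lin: "linear N" unfolding N
    using linM[OF sa pd] by (auto simp: linear_iff M_add[OF sa pd] M_scale[OF sa pd] algebra_simps)
  have sym: "N x \<bullet> y = x \<bullet> N y" for x y
    unfolding N using symM[OF sa pd, of x y] by (simp add: inner_diff_left inner_diff_right inner_commute)
  have "v0 \<bullet> v0 = 1" using v0 by (simp add: dot_square_norm)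
  then have "v0 \<bullet> N v0 = 0" unfolding N using mu by (simp add: inner_diff_right)
  then have "N v0 = 0" using psd_kernel[OF lin sym psd] by blast
  then show ?thesis unfolding N using s by auto
qed

lemma rayleigh_max: "\<exists>v0 \<mu>. v0 \<noteq> 0 \<and> M v0 = \<mu> *\<^sub>R v0 \<and> (\<forall>v. v \<bullet> M v \<le> \<mu> * (v \<bullet> v))"
proof -
  have cont: "continuous_on (sphere 0 1) (\<lambda>v::'a. v \<bullet> M v)"
    by (intro continuous_intros contM)
  obtain v0 where v0: "v0 \<in> sphere (0::'a) 1" and mx: "\<And>y. y \<in> sphere 0 1 \<Longrightarrow> y \<bullet> M y \<le> v0 \<bullet> M v0"
    using continuous_attains_sup[OF compact_sphere sphere_ne cont] by blast
  define \<mu> where "\<mu> = v0 \<bullet> M v0"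
  have all: "v \<bullet> M v \<le> \<mu> * (v \<bullet> v)" for v
  proof (cases "v = 0")
    case True then show ?thesis by (simp add: M_zero[OF sa pd])
  next
    case False
    have "(v \<bullet> M v) / (v \<bullet> v) \<le> \<mu>"
      using mx[OF rayleigh_ext(1)[OF False]] rayleigh_ext(2)[OF False] unfolding \<mu>_def by simp
    moreover have "0 < v \<bullet> v" using False by simp
    ultimately show ?thesis by (simp add: field_simps)
  qed
  have "M v0 = \<mu> *\<^sub>R v0"
    by (rule eig_from_ext[OF v0 refl, of 1]) (use all in \<open>auto simp: inner_diff_right \<mu>_def\<close>)
  moreover have "v0 \<noteq> 0" using v0 by auto
  ultimately show ?thesis using all by blast
qed

lemma rayleigh_min: "\<exists>v0 \<mu>. v0 \<noteq> 0 \<and> M v0 = \<mu> *\<^sub>R v0 \<and> (\<forall>v. \<mu> * (v \<bullet> v) \<le> v \<bullet> M v)"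
proof -
  have cont: "continuous_on (sphere 0 1) (\<lambda>v::'a. v \<bullet> M v)"
    by (intro continuous_intros contM)
  obtain v0 where v0: "v0 \<in> sphere (0::'a) 1" and mx: "\<And>y. y \<in> sphere 0 1 \<Longrightarrow> v0 \<bullet> M v0 \<le> y \<bullet> M y"
    using continuous_attains_inf[OF compact_sphere sphere_ne cont] by blast
  define \<mu> where "\<mu> = v0 \<bullet> M v0"
  have all: "\<mu> * (v \<bullet> v) \<le> v \<bullet> M v" for v
  proof (cases "v = 0")
    case True then show ?thesis by (simp add: M_zero[OF sa pd])
  next
    case False
    have "\<mu> \<le> (v \<bullet> M v) / (v \<bullet> v)"
      using mx[OF rayleigh_ext(1)[OF False]] rayleigh_ext(2)[OF False] unfolding \<mu>_def by simp
    moreover have "0 < v \<bullet> v" using False by simp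
    ultimately show ?thesis by (simp add: field_simps)
  qed
  have "M v0 = \<mu> *\<^sub>R v0"
    by (rule eig_from_ext[OF v0 refl, of "-1"]) (use all in \<open>auto simp: inner_diff_right \<mu>_def\<close>)
  moreover have "v0 \<noteq> 0" using v0 by auto
  ultimately show ?thesis using all by blast
qed

lemma eigvals_finite: "finite (eigvals M)"
proof -
  define e where "e l = (SOME v. v \<noteq> 0 \<and> M v = l *\<^sub>R v)" for l
  have e: "e l \<noteq> 0 \<and> M (e l) = l *\<^sub>R e l" if "l \<in> eigvals M" for l
    using that unfolding eigvals_def e_def by (rule CollectE) (rule someI_ex)
  have inj: "inj_on e (eigvals M)"
  proof (rule inj_onI)
    fix l l' assume l: "l \<in> eigvals M" and l': "l' \<in> eigvals M" and eq: "e l = e l'"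
    have "l *\<^sub>R e l = l' *\<^sub>R e l" using e[OF l] e[OF l'] eq by metis
    then show "l = l'" using e[OF l] by simp
  qed
  have "pairwise orthogonal (e ` eigvals M)"
  proof (rule pairwiseI, clarify)
    fix l l' assume l: "l \<in> eigvals M" and l': "l' \<in> eigvals M" and ne: "e l \<noteq> e l'"
    have "l \<noteq> l'" using ne by auto
    have "M (e l) \<bullet> e l' = e l \<bullet> M (e l')" by (rule symM[OF sa pd])
    then have "l * (e l \<bullet> e l') = l' * (e l \<bullet> e l')" using e[OF l] e[OF l'] by simp
    then show "orthogonal (e l) (e l')" using \<open>l \<noteq> l'\<close> unfolding orthogonal_def by simp
  qed
  moreover have "0 \<notin> e ` eigvals M" using e by auto
  ultimately have "independent (e ` eigvals M)" by (rule pairwise_orthogonal_independent)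
  then have "finite (e ` eigvals M)" by (rule finiteI_independent)
  then show ?thesis using inj finite_image_iff by blast
qed

lemma eigval_pos: "l \<in> eigvals M \<Longrightarrow> 0 < l"
proof -
  assume "l \<in> eigvals M"
  then obtain v where v: "v \<noteq> 0" "M v = l *\<^sub>R v" unfolding eigvals_def by blast
  have "0 < v \<bullet> M v" using pd v unfolding pos_def_def by blast
  then have "0 < l * (v \<bullet> v)" using v by simp
  moreover have "0 < v \<bullet> v" using v by simp
  ultimately show "0 < l" by (simp add: zero_less_mult_iff)
qed

lemma ip_le_lmax: "x \<bullet> M x \<le> lambda_max M * (x \<bullet> x)"
proof -
  obtain v0 \<mu> where v0: "v0 \<noteq> 0" "M v0 = \<mu> *\<^sub>R v0" and all: "\<And>v. v \<bullet> M v \<le> \<mu> * (v \<bullet> v)"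
    using rayleigh_max by blast
  have "\<mu> \<in> eigvals M" using v0 unfolding eigvals_def by blast
  then have "\<mu> \<le> lambda_max M" unfolding lambda_max_def using eigvals_finite by simp
  then have "\<mu> * (x \<bullet> x) \<le> lambda_max M * (x \<bullet> x)" by (simp add: mult_right_mono)
  then show ?thesis using all[of x] by linarith
qed

lemma lmin_props: "0 < lambda_min M" "lambda_min M \<le> lambda_max M"
  "lambda_min M * (x \<bullet> x) \<le> x \<bullet> M x"
proof -
  obtain v0 \<mu> where v0: "v0 \<noteq> 0" "M v0 = \<mu> *\<^sub>R v0" and all: "\<And>v. \<mu> * (v \<bullet> v) \<le> v \<bullet> M v"
    using rayleigh_min by blast
  have mu: "\<mu> \<in> eigvals M" using v0 unfolding eigvals_def by blast
  have ne: "eigvals M \<noteq> {}" using mu by blast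
  show "0 < lambda_min M" unfolding lambda_min_def
    using Min_in[OF eigvals_finite ne] eigval_pos by blast
  show "lambda_min M \<le> lambda_max M" unfolding lambda_min_def lambda_max_def
    using Min_le[OF eigvals_finite mu] Max_ge[OF eigvals_finite mu] by linarith
  have "lambda_min M \<le> \<mu>" unfolding lambda_min_def using eigvals_finite mu by simp
  then have "lambda_min M * (x \<bullet> x) \<le> \<mu> * (x \<bullet> x)" by (simp add: mult_right_mono)
  then show "lambda_min M * (x \<bullet> x) \<le> x \<bullet> M x" using all[of x] by linarith
qed

end

lemma mm_mono: "maximal_monotone T \<Longrightarrow> u \<in> T x \<Longrightarrow> v \<in> T y \<Longrightarrow> 0 \<le> (x - y) \<bullet> (u - v)"
  unfolding maximal_monotone_def monotone_op_def by blast

lemma mm_max: "maximal_monotone T \<Longrightarrow> (\<And>y v. v \<in> T y \<Longrightarrow> 0 \<le> (x - y) \<bullet> (u - v)) \<Longrightarrow> u \<in> T x"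
  unfolding maximal_monotone_def by blast

lemma zeros_eq:
  assumes "maximal_monotone T"
  shows "zeros T = (\<Inter>p\<in>{(y,v). v \<in> T y}. {x. x \<bullet> snd p \<le> fst p \<bullet> snd p})"
proof (rule set_eqI)
  fix x
  have "x \<in> zeros T \<longleftrightarrow> (\<forall>y v. v \<in> T y \<longrightarrow> 0 \<le> (x - y) \<bullet> (0 - v))"
  proof
    assume "x \<in> zeros T"
    then have "0 \<in> T x" unfolding zeros_def by simp
    then show "\<forall>y v. v \<in> T y \<longrightarrow> 0 \<le> (x - y) \<bullet> (0 - v)" using mm_mono[OF assms, of 0 x] by blast
  next
    assume "\<forall>y v. v \<in> T y \<longrightarrow> 0 \<le> (x - y) \<bullet> (0 - v)"
    then show "x \<in> zeros T" unfolding zeros_def using mm_max[OF assms, of x 0] by blast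
  qed
  also have "\<dots> \<longleftrightarrow> x \<in> (\<Inter>p\<in>{(y,v). v \<in> T y}. {x. x \<bullet> snd p \<le> fst p \<bullet> snd p})"
    by (auto simp: inner_diff_left)
  finally show "x \<in> zeros T \<longleftrightarrow> x \<in> (\<Inter>p\<in>{(y,v). v \<in> T y}. {x. x \<bullet> snd p \<le> fst p \<bullet> snd p})" .
qed

lemma zeros_closed: "maximal_monotone T \<Longrightarrow> closed (zeros (T :: 'a::euclidean_space \<Rightarrow> 'a set))"
proof -
  assume a: "maximal_monotone T"
  have "closed {x. x \<bullet> snd p \<le> fst p \<bullet> snd p}" for p :: "'a \<times> 'a"
    using closed_halfspace_le[of "snd p" "fst p \<bullet> snd p"] by (simp add: inner_commute)
  then show ?thesis unfolding zeros_eq[OF a] by (intro closed_INT) auto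
qed

lemma zeros_convex: "maximal_monotone T \<Longrightarrow> convex (zeros (T :: 'a::euclidean_space \<Rightarrow> 'a set))"
proof -
  assume a: "maximal_monotone T"
  have "convex {x. x \<bullet> snd p \<le> fst p \<bullet> snd p}" for p :: "'a \<times> 'a"
    using convex_halfspace_le[of "snd p" "fst p \<bullet> snd p"] by (simp add: inner_commute)
  then show ?thesis unfolding zeros_eq[OF a] by (intro convex_INT) auto
qed

lemma DF_finite:
  fixes F :: "('a::euclidean_space \<times> 'a) set" and \<phi> :: "'a \<Rightarrow> 'a"
  assumes fin: "finite F" and ne: "F \<noteq> {}"
    and mono: "\<And>g g'. g \<in> F \<Longrightarrow> g' \<in> F \<Longrightarrow> 0 \<le> (fst g - fst g') \<bullet> (snd g - snd g')"
    and cont: "continuous_on UNIV \<phi>"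
  shows "\<exists>x. \<forall>g\<in>F. 0 \<le> (snd g - \<phi> x) \<bullet> (fst g - x)"
proof (rule ccontr)
  assume "\<not> ?thesis"
  then have neg: "\<And>x. \<exists>g\<in>F. (snd g - \<phi> x) \<bullet> (fst g - x) < 0" by (auto simp: not_le)
  define C where "C = convex hull (fst ` F)"
  define h where "h (g::'a\<times>'a) x = max 0 (- ((snd g - \<phi> x) \<bullet> (fst g - x)))" for g x
  define H where "H x = (\<Sum>g\<in>F. h g x)" for x
  have h0: "0 \<le> h g x" for g x unfolding h_def by simp
  have Hpos: "0 < H x" for x
  proof -
    obtain g where g: "g \<in> F" "(snd g - \<phi> x) \<bullet> (fst g - x) < 0" using neg by blast
    have "0 < h g x" using g unfolding h_def by simp
    then show ?thesis unfolding H_def using sum_pos2[OF fin g(1), of "\<lambda>g. h g x"] h0 by blast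
  qed
  have Hne: "H x \<noteq> 0" for x using Hpos[of x] by simp
  define p where "p x = (\<Sum>g\<in>F. (h g x / H x) *\<^sub>R fst g)" for x
  have compC: "compact C" unfolding C_def using fin by (simp add: compact_convex_hull finite_imp_compact)
  have convC: "convex C" unfolding C_def by simp
  have neC: "C \<noteq> {}" unfolding C_def using ne by simp
  have contp: "continuous_on C p"
  proof -
    have ch: "continuous_on UNIV (h g)" for g
      unfolding h_def by (intro continuous_intros cont)
    have cH: "continuous_on UNIV H"
      unfolding H_def by (intro continuous_intros ch)
    show ?thesis unfolding p_def
      by (intro continuous_intros continuous_on_subset[OF ch] continuous_on_subset[OF cH])
        (simp_all add: Hne)
  qed
  have sumb: "(\<Sum>g\<in>F. h g x / H x) = 1" for x
    using Hpos[of x] unfolding H_def by (simp add: sum_divide_distrib[symmetric])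
  have pC: "p \<in> C \<rightarrow> C"
  proof
    fix x assume "x \<in> C"
    show "p x \<in> C" unfolding p_def
      by (rule convex_sum[OF fin convC sumb]) (auto simp: h0 Hpos C_def hull_inc less_imp_le)
  qed
  obtain x0 where "x0 \<in> C" and fx: "p x0 = x0" using brouwer[OF compC convC neC contp pC] by blast
  define b where "b (g::'a\<times>'a) = h g x0 / H x0" for g
  define a where "a (g::'a\<times>'a) (g'::'a\<times>'a) = (snd g' - \<phi> x0) \<bullet> (fst g - x0)" for g g'
  have b0: "0 \<le> b g" for g unfolding b_def using h0[of g x0] Hpos[of x0] by simp
  have bsum: "(\<Sum>g\<in>F. b g) = 1" unfolding b_def by (rule sumb)
  have zero_comb: "(\<Sum>g\<in>F. b g *\<^sub>R (fst g - x0)) = 0"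
  proof -
    have "(\<Sum>g\<in>F. b g *\<^sub>R (fst g - x0)) = (\<Sum>g\<in>F. b g *\<^sub>R fst g) - (\<Sum>g\<in>F. b g) *\<^sub>R x0"
      by (simp add: scaleR_diff_right sum_subtractf scaleR_sum_left)
    also have "\<dots> = p x0 - x0" using bsum unfolding p_def b_def by simp
    finally show ?thesis using fx by simp
  qed
  define S where "S = (\<Sum>g\<in>F. \<Sum>g'\<in>F. b g * b g' * a g g')"
  have S0: "S = 0"
  proof -
    have "S = (\<Sum>g'\<in>F. \<Sum>g\<in>F. b g' * (b g * a g g'))"
      unfolding S_def by (subst sum.swap) (simp add: algebra_simps)
    also have "\<dots> = (\<Sum>g'\<in>F. b g' * ((snd g' - \<phi> x0) \<bullet> (\<Sum>g\<in>F. b g *\<^sub>R (fst g - x0))))"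
      unfolding a_def by (simp add: inner_sum_right sum_distrib_left)
    also have "\<dots> = 0" unfolding zero_comb by simp
    finally show ?thesis .
  qed
  have amono: "a g g' + a g' g \<le> a g g + a g' g'" if "g \<in> F" "g' \<in> F" for g g'
  proof -
    have "a g g + a g' g' - a g g' - a g' g = (fst g - fst g') \<bullet> (snd g - snd g')"
      unfolding a_def by (simp add: inner_diff_left inner_diff_right inner_commute algebra_simps)
    then show ?thesis using mono[OF that] by linarith
  qed
  have "2 * S = (\<Sum>g\<in>F. \<Sum>g'\<in>F. b g * b g' * (a g g' + a g' g))"
  proof -
    have "S = (\<Sum>g\<in>F. \<Sum>g'\<in>F. b g * b g' * a g' g)"
      unfolding S_def by (subst sum.swap) (simp add: mult.commute)
    then show ?thesis unfolding S_def
      by (simp add: algebra_simps sum.distrib)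
  qed
  also have "\<dots> \<le> (\<Sum>g\<in>F. \<Sum>g'\<in>F. b g * b g' * (a g g + a g' g'))"
    by (intro sum_mono mult_left_mono amono) (auto simp: b0)
  also have "\<dots> = 2 * (\<Sum>g\<in>F. b g * a g g)"
  proof -
    have "(\<Sum>g\<in>F. \<Sum>g'\<in>F. b g * b g' * (a g g + a g' g')) =
      (\<Sum>g\<in>F. b g * a g g * (\<Sum>g'\<in>F. b g')) + (\<Sum>g\<in>F. b g * (\<Sum>g'\<in>F. b g' * a g' g'))"
      by (simp add: algebra_simps sum.distrib sum_distrib_left sum_distrib_right)
    also have "\<dots> = (\<Sum>g\<in>F. b g * a g g) + (\<Sum>g\<in>F. b g) * (\<Sum>g'\<in>F. b g' * a g' g')"
      by (simp add: sum_distrib_right[symmetric] bsum)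
    finally show ?thesis unfolding bsum by simp
  qed
  finally have le: "0 \<le> (\<Sum>g\<in>F. b g * a g g)" using S0 by simp
  have bterm: "b g * a g g = - ((h g x0)^2 / H x0)" for g
    unfolding b_def a_def h_def by (auto simp: max_def power2_eq_square)
  obtain g0 where g0: "g0 \<in> F" "(snd g0 - \<phi> x0) \<bullet> (fst g0 - x0) < 0" using neg by blast
  have "0 < (\<Sum>g\<in>F. (h g x0)^2 / H x0)"
    by (rule sum_pos2[OF fin g0(1)]) (use g0(2) Hpos[of x0] in \<open>auto simp: h_def\<close>)
  then have "(\<Sum>g\<in>F. b g * a g g) < 0" unfolding bterm by (simp add: sum_negf)
  then show False using le by simp
qed


context
  fixes M :: "'a::euclidean_space \<Rightarrow> 'a"
  assumes sa: "self_adjoint M" and pd: "pos_def M"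
begin

lemma resolvent_unique:
  assumes mm: "maximal_monotone T" and s: "0 < \<sigma>"
    and 1: "u1 \<in> T w1" "M (z - w1) = \<sigma> *\<^sub>R u1"
    and 2: "u2 \<in> T w2" "M (z - w2) = \<sigma> *\<^sub>R u2"
  shows "w1 = w2"
proof -
  have m: "0 \<le> (w1 - w2) \<bullet> (u1 - u2)" using mm_mono[OF mm 1(1) 2(1)] .
  have "\<sigma> *\<^sub>R (u1 - u2) = M (w2 - w1)"
    using 1(2) 2(2) by (simp add: M_diff[OF sa pd] scaleR_diff_right algebra_simps)
  then have "\<sigma> * ((w1 - w2) \<bullet> (u1 - u2)) = (w1 - w2) \<bullet> M (w2 - w1)"
    by (metis inner_scaleR_right)
  also have "\<dots> = - ((w1 - w2) \<bullet> M (w1 - w2))"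
    using ip_neg_right[OF sa pd, of "w1 - w2" "w1 - w2"] by simp
  finally have "(w1 - w2) \<bullet> M (w1 - w2) \<le> 0" using m s
    by (metis neg_0_le_iff_le zero_le_mult_iff less_imp_le)
  then have "(w1 - w2) \<bullet> M (w1 - w2) = 0" using ip_nonneg[OF sa pd, of "w1 - w2"] by linarith
  then have "w1 - w2 = 0" by (rule ip_zero[OF sa pd])
  then show ?thesis by simp
qed

lemma resolvent_exists:
  assumes mm: "maximal_monotone T" and s: "0 < \<sigma>"
  shows "\<exists>w. \<exists>u\<in>T w. M (z - w) = \<sigma> *\<^sub>R u"
proof -
  define G where "G = {(y,v). v \<in> T y}"
  have Gne: "G \<noteq> {}"
  proof
    assume "G = {}"
    then have "0 \<in> T 0" using mm_max[OF mm, of 0 0] unfolding G_def by auto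
    then show False using \<open>G = {}\<close> unfolding G_def by auto
  qed
  then obtain g0 where g0: "g0 \<in> G" by blast
  define \<phi> where "\<phi> x = (1/\<sigma>) *\<^sub>R (M z - M x)" for x
  have phiM: "\<phi> x = (1/\<sigma>) *\<^sub>R M (z - x)" for x unfolding \<phi>_def by (simp add: M_diff[OF sa pd])
  have contphi: "continuous_on UNIV \<phi>" unfolding \<phi>_def
    by (intro continuous_intros contM[OF sa pd])
  define K where "K g = {x. 0 \<le> (snd g - \<phi> x) \<bullet> (fst g - x)}" for g :: "'a \<times> 'a"
  have Kc: "closed (K g)" for g unfolding K_def
    by (rule closed_Collect_le) (intro continuous_intros contphi)+
  define y0 where "y0 = fst g0"
  define v0 where "v0 = snd g0"
  define A where "A = \<sigma> * norm v0 + norm (M (z - y0))"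
  define c where "c = A / lambda_min M"
  have lmin: "0 < lambda_min M" using lmin_props(1)[OF sa pd] .
  have bound: "x \<in> cball y0 c" if "x \<in> K g0" for x
  proof -
    define d where "d = x - y0"
    have "0 \<le> (v0 - \<phi> x) \<bullet> (y0 - x)" using that unfolding K_def v0_def y0_def by simp
    also have "(v0 - \<phi> x) \<bullet> (y0 - x) = - (v0 \<bullet> d) + (1/\<sigma>) * (M (z - y0) \<bullet> d) - (1/\<sigma>) * (d \<bullet> M d)"
    proof -
      have "z - x = (z - y0) - d" unfolding d_def by simp
      then have Mzx: "M (z - x) = M (z - y0) - M d" using M_diff[OF sa pd, of "z - y0" d] by metis
      have yx: "y0 - x = - d" unfolding d_def by simp
      show ?thesis unfolding phiM yx Mzx
        by (simp add: inner_diff_left inner_commute[of "M d" d] algebra_simps)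
    qed
    finally have "(1/\<sigma>) * (d \<bullet> M d) \<le> - (v0 \<bullet> d) + (1/\<sigma>) * (M (z - y0) \<bullet> d)" by simp
    then have "d \<bullet> M d \<le> \<sigma> * (- (v0 \<bullet> d)) + M (z - y0) \<bullet> d"
      using s by (simp add: field_simps)
    also have "\<dots> \<le> \<sigma> * (norm v0 * norm d) + norm (M (z - y0)) * norm d"
    proof -
      have "- (v0 \<bullet> d) \<le> norm v0 * norm d"
        using Cauchy_Schwarz_ineq2[of v0 d] by linarith
      moreover have "M (z - y0) \<bullet> d \<le> norm (M (z - y0)) * norm d"
        by (rule norm_cauchy_schwarz)
      moreover have "\<sigma> * (- (v0 \<bullet> d)) \<le> \<sigma> * (norm v0 * norm d)"
        using mult_left_mono[OF calculation(1), of \<sigma>] s by simp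
      ultimately show ?thesis by linarith
    qed
    also have "\<dots> = A * norm d" unfolding A_def by (simp add: algebra_simps)
    finally have 1: "d \<bullet> M d \<le> A * norm d" .
    have "lambda_min M * (norm d)^2 \<le> d \<bullet> M d"
      using lmin_props(3)[OF sa pd, of d] by (simp add: power2_norm_eq_inner)
    with 1 have "lambda_min M * (norm d * norm d) \<le> A * norm d" by (simp add: power2_eq_square)
    then have "norm d \<le> c"
    proof (cases "norm d = 0")
      case True
      have "0 \<le> A" unfolding A_def using s by simp
      then show ?thesis using True lmin unfolding c_def by simp
    next
      case False
      then have "0 < norm d" by simp
      then have "lambda_min M * norm d \<le> A" using \<open>lambda_min M * (norm d * norm d) \<le> A * norm d\<close>
        by (metis mult.assoc mult_le_cancel_right_pos)
      then show ?thesis unfolding c_def using lmin by (simp add: field_simps)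
    qed
    then show ?thesis unfolding d_def by (simp add: dist_norm norm_minus_commute)
  qed
  have monoG: "0 \<le> (fst g - fst g') \<bullet> (snd g - snd g')" if "g \<in> G" "g' \<in> G" for g g'
    using that mm_mono[OF mm] unfolding G_def by auto
  have "cball y0 c \<inter> (\<Inter>g\<in>G. K g) \<noteq> {}"
  proof (rule compact_imp_fip_image[OF compact_cball Kc])
    fix I' assume fin: "finite I'" and sub: "I' \<subseteq> G"
    have "\<exists>x. \<forall>g\<in>insert g0 I'. 0 \<le> (snd g - \<phi> x) \<bullet> (fst g - x)"
    proof (rule DF_finite)
      show "finite (insert g0 I')" using fin by simp
      show "insert g0 I' \<noteq> {}" by simp
      show "continuous_on UNIV \<phi>" by (rule contphi)
      fix g g' assume "g \<in> insert g0 I'" "g' \<in> insert g0 I'"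
      then have "g \<in> G" "g' \<in> G" using sub g0 by auto
      then show "0 \<le> (fst g - fst g') \<bullet> (snd g - snd g')" by (rule monoG)
    qed
    then obtain x where x: "\<forall>g\<in>insert g0 I'. 0 \<le> (snd g - \<phi> x) \<bullet> (fst g - x)" by blast
    then have "x \<in> K g0" unfolding K_def by simp
    then have "x \<in> cball y0 c" by (rule bound)
    moreover have "x \<in> (\<Inter>g\<in>I'. K g)" using x unfolding K_def by simp
    ultimately show "cball y0 c \<inter> (\<Inter>g\<in>I'. K g) \<noteq> {}" by blast
  qed
  then obtain x where x: "x \<in> (\<Inter>g\<in>G. K g)" by blast
  have "\<phi> x \<in> T x"
  proof (rule mm_max[OF mm])
    fix y v assume "v \<in> T y"
    then have "(y, v) \<in> G" unfolding G_def by simp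
    then have "0 \<le> (v - \<phi> x) \<bullet> (y - x)" using x unfolding K_def by auto
    also have "(v - \<phi> x) \<bullet> (y - x) = (x - y) \<bullet> (\<phi> x - v)"
      by (simp add: inner_diff_left inner_diff_right inner_commute algebra_simps)
    finally show "0 \<le> (x - y) \<bullet> (\<phi> x - v)" .
  qed
  moreover have "M (z - x) = \<sigma> *\<^sub>R \<phi> x" unfolding phiM using s by simp
  ultimately show ?thesis by blast
qed

lemma resolvent_prop:
  assumes mm: "maximal_monotone T" and s: "0 < \<sigma>"
  shows "\<exists>u\<in>T (resolvent \<sigma> M T z). M (z - resolvent \<sigma> M T z) = \<sigma> *\<^sub>R u"
proof -
  have "\<exists>!w. \<exists>u\<in>T w. M (z - w) = \<sigma> *\<^sub>R u"
    using resolvent_exists[OF mm s] resolvent_unique[OF mm s] by blast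
  then show ?thesis unfolding resolvent_def by (rule theI')
qed

end

lemma RL_sqrt:
  fixes X D K :: real
  assumes "0 \<le> X" "0 \<le> D" "X^2 \<le> K * D^2"
  shows "X \<le> sqrt K * D"
proof -
  have "X \<le> sqrt (K * D^2)" using assms(3) by (rule real_le_rsqrt)
  also have "\<dots> = sqrt K * D" using assms(2) by (simp add: real_sqrt_mult)
  finally show ?thesis .
qed

lemma RL1:
  fixes X D b \<gamma> \<alpha> :: real
  assumes g: "0 < \<gamma>" "\<gamma> \<le> 1" and al: "0 < \<alpha>"
    and b: "b^2 * (1 + \<alpha>^2) \<le> D^2" and X: "X^2 \<le> (1 - \<gamma>) * D^2 + \<gamma> * b^2"
  shows "X^2 \<le> (1 - min \<gamma> (2*\<gamma> - \<gamma>^2) * \<alpha>^2 / (\<alpha>^2 + 1)) * D^2"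
proof -
  have m: "min \<gamma> (2*\<gamma> - \<gamma>^2) = \<gamma>" using g by (simp add: power2_eq_square min_def mult_left_le)
  have p: "0 < 1 + \<alpha>^2" by (simp add: add_pos_nonneg)
  have "b^2 \<le> D^2 / (1 + \<alpha>^2)" using b p by (simp add: field_simps)
  then have "\<gamma> * b^2 \<le> \<gamma> * (D^2 / (1 + \<alpha>^2))" by (rule mult_left_mono) (use g in simp)
  then have "X^2 \<le> (1 - \<gamma>) * D^2 + \<gamma> * (D^2 / (1 + \<alpha>^2))" using X by linarith
  also have "\<dots> = (1 - \<gamma> * \<alpha>^2 / (\<alpha>^2 + 1)) * D^2" using p by (simp add: field_simps)
  finally show ?thesis unfolding m .
qed

lemma RL2:
  fixes X D a b \<gamma> \<alpha> :: real
  assumes g: "1 < \<gamma>" "\<gamma> < 2" and al: "0 < \<alpha>"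
    and ab: "a^2 + b^2 \<le> D^2" and ba: "\<alpha>^2 * b^2 \<le> a^2" and X: "X^2 \<le> b^2 + (\<gamma> - 1)^2 * a^2"
  shows "X^2 \<le> (1 - min \<gamma> (2*\<gamma> - \<gamma>^2) * \<alpha>^2 / (\<alpha>^2 + 1)) * D^2"
proof -
  define c where "c = (\<gamma> - 1)^2"
  have c: "0 \<le> c" "c \<le> 1" unfolding c_def using g by (auto simp: power2_eq_square mult_le_one)
  have "\<gamma> * 1 \<le> \<gamma> * \<gamma>" using g by (intro mult_left_mono) auto
  then have m: "min \<gamma> (2*\<gamma> - \<gamma>^2) = 2*\<gamma> - \<gamma>^2" by (simp add: power2_eq_square min_def)
  have p: "0 < 1 + \<alpha>^2" by (simp add: add_pos_nonneg)
  have key: "(1 + \<alpha>^2) * (b^2 + c * a^2) \<le> (c * \<alpha>^2 + 1) * D^2"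
  proof -
    have "(c * \<alpha>^2 + 1) * (a^2 + b^2) - (1 + \<alpha>^2) * (b^2 + c * a^2) = (1 - c) * (a^2 - \<alpha>^2 * b^2)"
      by (simp add: algebra_simps)
    moreover have "0 \<le> (1 - c) * (a^2 - \<alpha>^2 * b^2)" using c ba by simp
    moreover have "(c * \<alpha>^2 + 1) * (a^2 + b^2) \<le> (c * \<alpha>^2 + 1) * D^2"
      using ab c by (intro mult_left_mono) (auto simp: add_nonneg_nonneg)
    ultimately show ?thesis by linarith
  qed
  have "X^2 \<le> (b^2 + c * a^2)" using X unfolding c_def .
  also have "\<dots> \<le> (c * \<alpha>^2 + 1) * D^2 / (1 + \<alpha>^2)" using key p by (simp add: field_simps)
  also have "\<dots> = (1 - (2*\<gamma> - \<gamma>^2) * \<alpha>^2 / (\<alpha>^2 + 1)) * D^2"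
    unfolding c_def using p by (simp add: field_simps power2_eq_square)
  finally show ?thesis unfolding m .
qed

lemma RL0:
  fixes \<gamma> \<alpha> :: real
  assumes g: "0 < \<gamma>" "\<gamma> < 2"
  shows "0 \<le> 1 - min \<gamma> (2*\<gamma> - \<gamma>^2) * \<alpha>^2 / (\<alpha>^2 + 1)"
proof -
  have p: "0 < \<alpha>^2 + 1" by (simp add: add_pos_nonneg add.commute[of _ 1])
  have "min \<gamma> (2*\<gamma> - \<gamma>^2) \<le> 2*\<gamma> - \<gamma>^2" by simp
  also have "2*\<gamma> - \<gamma>^2 \<le> 1" using zero_le_power2[of "\<gamma> - 1"]
    by (simp add: power2_eq_square algebra_simps)
  finally have m1: "min \<gamma> (2*\<gamma> - \<gamma>^2) \<le> 1" .
  have "min \<gamma> (2*\<gamma> - \<gamma>^2) * \<alpha>^2 \<le> 1 * (\<alpha>^2 + 1)"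
  proof (cases "min \<gamma> (2*\<gamma> - \<gamma>^2) \<le> 0")
    case True then show ?thesis by (simp add: mult_nonpos_nonneg add_nonneg_nonneg order_trans[OF mult_nonpos_nonneg])
  next
    case False
    then have "min \<gamma> (2*\<gamma> - \<gamma>^2) * \<alpha>^2 \<le> 1 * \<alpha>^2" using m1 by (intro mult_right_mono) auto
    then show ?thesis by simp
  qed
  then show ?thesis using p by (simp add: field_simps)
qed

lemma RL3:
  fixes \<gamma> \<delta> \<alpha> :: real
  assumes g: "0 < \<gamma>" "\<gamma> < 2" and d: "0 \<le> \<delta>" "\<delta> < 1" and al: "0 < \<alpha>"
  defines "r0 \<equiv> sqrt (1 - min \<gamma> (2*\<gamma> - \<gamma>^2) * \<alpha>^2 / (\<alpha>^2 + 1))"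
  shows "r0 + \<gamma> * \<delta> / (1 - \<delta>) \<le> (1 / (1 - \<delta>)) * (r0 + \<delta> * (min \<gamma> 1 / sqrt (\<alpha>^2 + 1) + 1))"
proof -
  have r0: "0 \<le> r0" unfolding r0_def using RL0[OF g, of \<alpha>] by simp
  have t: "0 \<le> min \<gamma> 1 / sqrt (\<alpha>^2 + 1)" using g by simp
  have gle: "\<gamma> \<le> r0 + min \<gamma> 1 / sqrt (\<alpha>^2 + 1) + 1"
  proof (cases "\<gamma> \<le> 1")
    case True then show ?thesis using r0 t by linarith
  next
    case False
    have p: "0 < \<alpha>^2 + 1" by (simp add: add_pos_nonneg add.commute[of _ 1])
    have "\<gamma> * 1 \<le> \<gamma> * \<gamma>" using False g by (intro mult_left_mono) auto
    then have m: "min \<gamma> (2*\<gamma> - \<gamma>^2) = 2*\<gamma> - \<gamma>^2" by (simp add: power2_eq_square min_def)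
    have "(\<gamma> - 1)^2 \<le> 1 - (2*\<gamma> - \<gamma>^2) * \<alpha>^2 / (\<alpha>^2 + 1)"
    proof -
      have "(\<gamma> - 1)^2 * (\<alpha>^2 + 1) \<le> (\<alpha>^2 + 1) - (2*\<gamma> - \<gamma>^2) * \<alpha>^2"
      proof -
        have "(\<alpha>^2 + 1) - (2*\<gamma> - \<gamma>^2) * \<alpha>^2 - (\<gamma> - 1)^2 * (\<alpha>^2 + 1) = 1 - (\<gamma> - 1)^2"
          by (simp add: power2_eq_square algebra_simps)
        moreover have "(\<gamma> - 1)^2 \<le> 1" using False g by (simp add: power2_eq_square mult_le_one)
        ultimately show ?thesis by linarith
      qed
      then show ?thesis using p by (simp add: field_simps)
    qed
    then have "sqrt ((\<gamma> - 1)^2) \<le> r0" unfolding r0_def m by (rule real_sqrt_le_mono)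
    then have "\<gamma> - 1 \<le> r0" using False by simp
    then show ?thesis using t by linarith
  qed
  have "r0 + \<gamma> * \<delta> / (1 - \<delta>) = (r0 * (1 - \<delta>) + \<gamma> * \<delta>) / (1 - \<delta>)" using d by (simp add: field_simps)
  also have "\<dots> \<le> (r0 + \<delta> * (min \<gamma> 1 / sqrt (\<alpha>^2 + 1) + 1)) / (1 - \<delta>)"
  proof (rule divide_right_mono)
    have "\<gamma> * \<delta> \<le> (r0 + min \<gamma> 1 / sqrt (\<alpha>^2 + 1) + 1) * \<delta>" using gle d by (simp add: mult_right_mono)
    then show "r0 * (1 - \<delta>) + \<gamma> * \<delta> \<le> r0 + \<delta> * (min \<gamma> 1 / sqrt (\<alpha>^2 + 1) + 1)"
      by (simp add: algebra_simps)
    show "0 \<le> 1 - \<delta>" using d by simp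
  qed
  finally show ?thesis by simp
qed


context
  fixes M :: "'a::euclidean_space \<Rightarrow> 'a" and T :: "'a \<Rightarrow> 'a set"
  assumes sa: "self_adjoint M" and pd: "pos_def M" and mm: "maximal_monotone T"
    and One: "zeros T \<noteq> {}" and lmax: "lambda_max M = 1"
begin

lemmas ipS = ip_simps[OF sa pd]
lemmas ipsym = ip_sym[OF sa pd]
lemmas nsq = normM_sq[OF sa pd]
lemmas nnn = normM_nonneg[OF sa pd]
lemmas ntri = normM_triangle_diff[OF sa pd]
lemmas ncom = normM_commute[OF sa pd]
lemmas nscale = normM_scale[OF sa pd]

lemma normM_le_norm: "normM M x \<le> norm x"
proof -
  have "x \<bullet> M x \<le> (norm x)^2" using ip_le_lmax[OF sa pd, of x] lmax by (simp add: power2_norm_eq_inner)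
  then have "sqrt (x \<bullet> M x) \<le> sqrt ((norm x)^2)" by (rule real_sqrt_le_mono)
  then show ?thesis unfolding normM_def by simp
qed

lemma norm_M_le: "norm (M x) \<le> normM M x"
proof -
  have "M x \<bullet> M x = x \<bullet> M (M x)" by (rule symM[OF sa pd])
  also have "\<dots> \<le> normM M x * normM M (M x)" by (rule ip_cs[OF sa pd])
  also have "\<dots> \<le> normM M x * norm (M x)" by (rule mult_left_mono[OF normM_le_norm nnn])
  finally have 1: "norm (M x) * norm (M x) \<le> normM M x * norm (M x)" by (simp add: dot_square_norm power2_eq_square)
  show ?thesis
  proof (cases "norm (M x) = 0")
    case True then show ?thesis using nnn[of x] by simp
  next
    case False then show ?thesis using 1 by (simp add: mult_le_cancel_right)
  qed
qed

lemma norm_le_normM: "sqrt (lambda_min M) * norm x \<le> normM M x"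
proof -
  have "lambda_min M * (norm x)^2 \<le> x \<bullet> M x" using lmin_props(3)[OF sa pd, of x] by (simp add: power2_norm_eq_inner)
  then have "sqrt (lambda_min M * (norm x)^2) \<le> sqrt (x \<bullet> M x)" by (rule real_sqrt_le_mono)
  then show ?thesis unfolding normM_def by (simp add: real_sqrt_mult)
qed

lemma proj_exists: "\<exists>p\<in>zeros T. \<forall>q\<in>zeros T. normM M (p - x) \<le> normM M (q - x)"
proof -
  obtain q0 where q0: "q0 \<in> zeros T" using One by blast
  define c where "c = normM M (q0 - x)"
  have lmin: "0 < lambda_min M" by (rule lmin_props(1)[OF sa pd])
  define R where "R = c / sqrt (lambda_min M)"
  define S where "S = zeros T \<inter> cball x R"
  have cS: "compact S" unfolding S_def
    by (intro closed_Int_compact zeros_closed[OF mm] compact_cball)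
  have q0S: "q0 \<in> S"
  proof -
    have "sqrt (lambda_min M) * norm (q0 - x) \<le> c" unfolding c_def by (rule norm_le_normM)
    then have "norm (q0 - x) \<le> R" unfolding R_def using lmin by (simp add: field_simps)
    then show ?thesis unfolding S_def using q0 by (simp add: dist_norm norm_minus_commute)
  qed
  have cont: "continuous_on S (\<lambda>q. normM M (q - x))"
  proof -
    have eq: "normM M (q - x) = sqrt ((q - x) \<bullet> (M q - M x))" for q
      unfolding normM_def by (simp add: M_diff[OF sa pd])
    show ?thesis unfolding eq by (intro continuous_intros contM[OF sa pd])
  qed
  obtain p where pS: "p \<in> S" and pmin: "\<And>y. y \<in> S \<Longrightarrow> normM M (p - x) \<le> normM M (y - x)"
    using continuous_attains_inf[OF cS _ cont] q0S by blast
  have "normM M (p - x) \<le> normM M (q - x)" if q: "q \<in> zeros T" for q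
  proof (cases "q \<in> S")
    case True then show ?thesis by (rule pmin)
  next
    case False
    then have "R < norm (q - x)" using q unfolding S_def by (simp add: dist_norm norm_minus_commute)
    then have "c < sqrt (lambda_min M) * norm (q - x)" unfolding R_def using lmin by (simp add: field_simps)
    also have "\<dots> \<le> normM M (q - x)" by (rule norm_le_normM)
    finally have "c < normM M (q - x)" .
    moreover have "normM M (p - x) \<le> c" unfolding c_def using pmin[OF q0S] .
    ultimately show ?thesis by simp
  qed
  then show ?thesis using pS unfolding S_def by blast
qed

lemma distM_eq: "p \<in> zeros T \<Longrightarrow> (\<forall>q\<in>zeros T. normM M (p - x) \<le> normM M (q - x)) \<Longrightarrow>
   distM M x (zeros T) = normM M (p - x)"
  unfolding distM_def by (rule cInf_eq_minimum) auto

lemma proj_obtain: obtains p where "p \<in> zeros T" "distM M x (zeros T) = normM M (p - x)"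
  using proj_exists[of x] distM_eq by blast

lemma distM_le: "q \<in> zeros T \<Longrightarrow> distM M x (zeros T) \<le> normM M (q - x)"
  using proj_exists[of x] distM_eq by fastforce

lemma distM_nonneg: "0 \<le> distM M x (zeros T)"
  using proj_obtain[of x] nnn by metis

lemma res_facts:
  assumes s: "0 < \<sigma>" and J: "J = resolvent \<sigma> M T z"
  shows "\<exists>u\<in>T J. M (z - J) = \<sigma> *\<^sub>R u" and "\<And>q. q \<in> zeros T \<Longrightarrow> 0 \<le> (J - q) \<bullet> M (z - J)"
proof -
  show ex: "\<exists>u\<in>T J. M (z - J) = \<sigma> *\<^sub>R u" unfolding J by (rule resolvent_prop[OF sa pd mm s])
  fix q assume "q \<in> zeros T"
  then have q: "0 \<in> T q" unfolding zeros_def by simp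
  obtain u where u: "u \<in> T J" "M (z - J) = \<sigma> *\<^sub>R u" using ex by blast
  have "0 \<le> (J - q) \<bullet> (u - 0)" by (rule mm_mono[OF mm u(1) q])
  then show "0 \<le> (J - q) \<bullet> M (z - J)" unfolding u(2) using s by simp
qed

lemma F1:
  assumes s: "0 < \<sigma>" and J: "J = resolvent \<sigma> M T z" and q: "q \<in> zeros T"
  shows "(normM M (z - J))^2 + (normM M (J - q))^2 \<le> (normM M (z - q))^2"
proof -
  have m: "0 \<le> (J - q) \<bullet> M (z - J)" by (rule res_facts(2)[OF s J q])
  have "z - q = (z - J) + (J - q)" by simp
  then have "(z - q) \<bullet> M (z - q) = (z - J) \<bullet> M (z - J) + 2 * ((z - J) \<bullet> M (J - q)) + (J - q) \<bullet> M (J - q)"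
    using ip_expand_add[OF sa pd, of "z - J" "J - q"] by simp
  moreover have "(z - J) \<bullet> M (J - q) = (J - q) \<bullet> M (z - J)" by (rule ipsym)
  ultimately show ?thesis unfolding nsq using m by linarith
qed

lemma fejer:
  assumes s: "0 < \<sigma>" and J: "J = resolvent \<sigma> M T z" and q: "q \<in> zeros T"
    and g: "0 < \<gamma>" "\<gamma> < 2"
  shows "normM M (z + \<gamma> *\<^sub>R (J - z) - q) \<le> normM M (z - q)"
proof -
  have m: "0 \<le> (J - q) \<bullet> M (z - J)" by (rule res_facts(2)[OF s J q])
  have e: "z + \<gamma> *\<^sub>R (J - z) - q = (z - q) - \<gamma> *\<^sub>R (z - J)" by (simp add: algebra_simps)
  have "(z + \<gamma> *\<^sub>R (J - z) - q) \<bullet> M (z + \<gamma> *\<^sub>R (J - z) - q) =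
     (z - q) \<bullet> M (z - q) - 2 * \<gamma> * ((z - q) \<bullet> M (z - J)) + \<gamma>^2 * ((z - J) \<bullet> M (z - J))"
    unfolding e using ip_expand_diff[OF sa pd, of "z - q" "\<gamma> *\<^sub>R (z - J)"]
    by (simp only: ip_scale_left ip_scale_right[OF sa pd]) (simp add: power2_eq_square)
  moreover have "(z - q) \<bullet> M (z - J) = (z - J) \<bullet> M (z - J) + (J - q) \<bullet> M (z - J)"
  proof -
    have "z - q = (z - J) + (J - q)" by simp
    then show ?thesis by (metis ip_add_left[OF sa pd])
  qed
  moreover have "0 \<le> (z - J) \<bullet> M (z - J)" by (rule ip_nonneg[OF sa pd])
  moreover have "\<gamma>^2 \<le> 2 * \<gamma>" using g by (simp add: power2_eq_square)
  ultimately have "(z + \<gamma> *\<^sub>R (J - z) - q) \<bullet> M (z + \<gamma> *\<^sub>R (J - z) - q) \<le> (z - q) \<bullet> M (z - q)"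
    using m g
    by (smt (verit, best) mult_left_mono mult_right_mono)
  then show ?thesis unfolding normM_def by simp
qed

end

context
  fixes M :: "'a::euclidean_space \<Rightarrow> 'a" and T :: "'a \<Rightarrow> 'a set"
  assumes sa: "self_adjoint M" and pd: "pos_def M" and mm: "maximal_monotone T"
    and One: "zeros T \<noteq> {}" and lmax: "lambda_max M = 1"
begin

lemmas ipS7 = ip_simps[OF sa pd]
lemmas nsq7 = normM_sq[OF sa pd]
lemmas nnn7 = normM_nonneg[OF sa pd]
lemmas ntri7 = normM_triangle_diff[OF sa pd]
lemmas ncom7 = normM_commute[OF sa pd]
lemmas nscale7 = normM_scale[OF sa pd]
lemmas dle7 = distM_le[OF sa pd mm One lmax]
lemmas dnn7 = distM_nonneg[OF sa pd mm One lmax]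

lemma conv_ip:
  "((1-g) *\<^sub>R x + g *\<^sub>R y) \<bullet> M ((1-g) *\<^sub>R x + g *\<^sub>R y) =
     (1-g) * (x \<bullet> M x) + g * (y \<bullet> M y) - g * (1-g) * ((x - y) \<bullet> M (x - y))"
proof -
  have s: "y \<bullet> M x = x \<bullet> M y" by (rule ip_sym[OF sa pd])
  show ?thesis by (simp add: ipS7 s algebra_simps power2_eq_square)
qed

lemma one_step:
  assumes s: "0 < \<sigma>" and J: "J = resolvent \<sigma> M T z" and zp: "zp = \<gamma> *\<^sub>R w + (1 - \<gamma>) *\<^sub>R z"
    and wJ: "normM M (w - J) \<le> \<delta> * normM M (w - z)"
    and g: "0 < \<gamma>" "\<gamma> < 2" and d: "0 \<le> \<delta>" "\<delta> < 1" and al: "0 < \<alpha>"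
    and kap: "subreg_const T r \<kappa>" and Jr: "norm J \<le> r" and ks: "\<kappa> * \<alpha> \<le> \<sigma>"
  shows "distM M zp (zeros T) \<le> (1 / (1 - \<delta>)) * (sqrt (1 - min \<gamma> (2*\<gamma> - \<gamma>^2) * \<alpha>^2 / (\<alpha>^2 + 1))
               + \<delta> * (min \<gamma> 1 / sqrt (\<alpha>^2 + 1) + 1)) * distM M z (zeros T)"
    and "normM M (zp - z) \<le> \<gamma> * distM M z (zeros T) / (1 - \<delta>)"
    and "\<gamma> * (1 - sqrt (1 / (\<alpha>^2 + 1))) * distM M z (zeros T) / (1 + \<delta>) \<le> normM M (zp - z)"
proof -
  define D where "D = distM M z (zeros T)"
  define a where "a = normM M (z - J)"
  define b where "b = distM M J (zeros T)"
  have D0: "0 \<le> D" unfolding D_def by (rule dnn7)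
  have a0: "0 \<le> a" unfolding a_def by (rule nnn7)
  have b0: "0 \<le> b" unfolding b_def by (rule dnn7)
  obtain u where u: "u \<in> T J" "M (z - J) = \<sigma> *\<^sub>R u" using res_facts(1)[OF sa pd mm One lmax s J] by blast
  obtain p where p: "p \<in> zeros T" "D = normM M (p - z)"
    using proj_obtain[OF sa pd mm One lmax, of z] unfolding D_def by metis
  obtain q where q: "q \<in> zeros T" "b = normM M (q - J)"
    using proj_obtain[OF sa pd mm One lmax, of J] unfolding b_def by metis
  have k0: "0 < \<kappa>" using kap unfolding subreg_const_def by simp
  have ba: "\<alpha> * b \<le> a"
  proof -
    have "infdist J (zeros T) \<le> \<kappa> * infdist 0 (T J)"
      using kap Jr u(1) unfolding subreg_const_def by blast
    also have "infdist 0 (T J) \<le> norm u" using infdist_le[OF u(1), of 0] by simp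
    also have "\<sigma> * norm u = norm (M (z - J))" using u(2) s by simp
    then have "norm u = norm (M (z - J)) / \<sigma>" using s by (simp add: field_simps)
    also have "norm (M (z - J)) \<le> a" unfolding a_def by (rule norm_M_le[OF sa pd mm One lmax])
    finally have inf: "infdist J (zeros T) \<le> \<kappa> * (a / \<sigma>)" using k0 s by (simp add: divide_right_mono mult_left_mono)
    obtain q' where q': "q' \<in> zeros T" "infdist J (zeros T) = dist J q'"
      using infdist_attains_inf[OF zeros_closed[OF mm] One] by blast
    have "b \<le> normM M (q' - J)" unfolding b_def by (rule dle7[OF q'(1)])
    also have "\<dots> \<le> norm (q' - J)" by (rule normM_le_norm[OF sa pd mm One lmax])
    also have "\<dots> = infdist J (zeros T)" using q'(2) by (simp add: dist_norm norm_minus_commute)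
    finally have "b \<le> \<kappa> * (a / \<sigma>)" using inf by linarith
    then have "\<sigma> * b \<le> \<kappa> * a" using s by (simp add: field_simps)
    moreover have "\<alpha> * b * \<kappa> \<le> \<sigma> * b"
    proof -
      have "(\<kappa> * \<alpha>) * b \<le> \<sigma> * b" using ks b0 by (rule mult_right_mono)
      then show ?thesis by (simp add: algebra_simps)
    qed
    ultimately have "(\<alpha> * b) * \<kappa> \<le> a * \<kappa>" by (simp add: mult.commute)
    then show ?thesis using k0 by simp
  qed
  have abD: "a^2 + b^2 \<le> D^2"
  proof -
    have "a^2 + (normM M (J - p))^2 \<le> (normM M (z - p))^2" unfolding a_def by (rule F1[OF sa pd mm One lmax s J p(1)])
    moreover have "b \<le> normM M (J - p)" unfolding b_def using dle7[OF p(1), of J] ncom7 by simp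
    then have "b^2 \<le> (normM M (J - p))^2" using b0 by (simp add: power_mono)
    moreover have "normM M (z - p) = D" using p(2) ncom7 by simp
    ultimately show ?thesis by simp
  qed
  have aD: "a \<le> D"
  proof (rule power2_le_imp_le[OF _ D0])
    show "a^2 \<le> D^2" using abD zero_le_power2[of b] by linarith
  qed
  have ba2: "\<alpha>^2 * b^2 \<le> a^2"
  proof -
    have "0 \<le> \<alpha> * b" using al b0 by simp
    then have "(\<alpha> * b)^2 \<le> a^2" by (rule power_mono[OF ba])
    then show ?thesis by (simp add: power_mult_distrib)
  qed
  have bD: "b^2 * (1 + \<alpha>^2) \<le> D^2" using abD ba2 by (simp add: algebra_simps)
  define K where "K = 1 - min \<gamma> (2*\<gamma> - \<gamma>^2) * \<alpha>^2 / (\<alpha>^2 + 1)"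
  define zh where "zh = z + \<gamma> *\<^sub>R (J - z)"
  have ex: "\<exists>m\<in>zeros T. (normM M (zh - m))^2 \<le> K * D^2"
  proof (cases "\<gamma> \<le> 1")
    case True
    define m where "m = (1 - \<gamma>) *\<^sub>R p + \<gamma> *\<^sub>R q"
    have mO: "m \<in> zeros T" unfolding m_def
      using convexD[OF zeros_convex[OF mm] p(1) q(1), of "1 - \<gamma>" \<gamma>] g True by simp
    have e: "zh - m = (1 - \<gamma>) *\<^sub>R (z - p) + \<gamma> *\<^sub>R (J - q)" unfolding zh_def m_def by (simp add: algebra_simps)
    have "(normM M (zh - m))^2 = (1-\<gamma>) * (normM M (z - p))^2 + \<gamma> * (normM M (J - q))^2
        - \<gamma> * (1-\<gamma>) * (normM M ((z - p) - (J - q)))^2"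
      unfolding nsq7 e by (rule conv_ip)
    also have "\<dots> \<le> (1-\<gamma>) * D^2 + \<gamma> * b^2"
    proof -
      have "0 \<le> \<gamma> * (1-\<gamma>) * (normM M ((z - p) - (J - q)))^2" using g True by simp
      moreover have "normM M (z - p) = D" using p(2) ncom7 by simp
      moreover have "normM M (J - q) = b" using q(2) ncom7 by simp
      ultimately show ?thesis by simp
    qed
    finally have "(normM M (zh - m))^2 \<le> (1-\<gamma>) * D^2 + \<gamma> * b^2" .
    then have "(normM M (zh - m))^2 \<le> K * D^2" unfolding K_def by (rule RL1[OF g(1) True al bD])
    then show ?thesis using mO by blast
  next
    case False
    have e: "zh - q = (J - q) + (\<gamma> - 1) *\<^sub>R (J - z)" unfolding zh_def by (simp add: algebra_simps)
    have "(normM M (zh - q))^2 = (J - q) \<bullet> M (J - q) + 2 * ((\<gamma> - 1) * ((J - q) \<bullet> M (J - z)))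
        + (\<gamma> - 1)^2 * ((J - z) \<bullet> M (J - z))"
      unfolding nsq7 e using ip_expand_add[OF sa pd, of "J - q" "(\<gamma> - 1) *\<^sub>R (J - z)"]
      by (simp only: ip_scale_left ip_scale_right[OF sa pd]) (simp add: power2_eq_square)
    also have "\<dots> \<le> b^2 + (\<gamma> - 1)^2 * a^2"
    proof -
      have "(J - q) \<bullet> M (J - z) = - ((J - q) \<bullet> M (z - J))"
        using ip_neg_right[OF sa pd, of "J - q" "z - J"] by simp
      moreover have "0 \<le> (J - q) \<bullet> M (z - J)" by (rule res_facts(2)[OF sa pd mm One lmax s J q(1)])
      moreover have "(J - q) \<bullet> M (J - q) = b^2" using q(2) ncom7 nsq7 by metis
      moreover have "(J - z) \<bullet> M (J - z) = a^2" unfolding a_def using ncom7 nsq7 by metis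
      moreover have "0 \<le> \<gamma> - 1" using False by simp
      ultimately show ?thesis by (simp add: mult_nonneg_nonpos)
    qed
    finally have X: "(normM M (zh - q))^2 \<le> b^2 + (\<gamma> - 1)^2 * a^2" .
    have g1: "1 < \<gamma>" using False by simp
    have "(normM M (zh - q))^2 \<le> K * D^2" unfolding K_def by (rule RL2[OF g1 g(2) al abD ba2 X])
    then show ?thesis using q(1) by blast
  qed
  then obtain m where mO: "m \<in> zeros T" and mK: "(normM M (zh - m))^2 \<le> K * D^2" by blast
  have zhm: "normM M (zh - m) \<le> sqrt K * D" by (rule RL_sqrt[OF nnn7 D0 mK])
  have wz: "normM M (w - z) \<le> a / (1 - \<delta>)"
  proof -
    have "normM M (w - z) \<le> normM M (w - J) + normM M (J - z)" by (rule ntri7)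
    also have "normM M (J - z) = a" unfolding a_def by (rule ncom7)
    finally have "normM M (w - z) \<le> \<delta> * normM M (w - z) + a" using wJ by linarith
    then have "(1 - \<delta>) * normM M (w - z) \<le> a" by (simp add: algebra_simps)
    then show ?thesis using d by (simp add: field_simps)
  qed
  have zpz: "normM M (zp - z) = \<gamma> * normM M (w - z)"
  proof -
    have "zp - z = \<gamma> *\<^sub>R (w - z)" unfolding zp by (simp add: algebra_simps)
    then show ?thesis using g by (simp add: nscale7)
  qed
  show "normM M (zp - z) \<le> \<gamma> * D / (1 - \<delta>)" unfolding D_def[symmetric]
  proof -
    have "normM M (zp - z) \<le> \<gamma> * (a / (1 - \<delta>))" unfolding zpz using mult_left_mono[OF wz, of \<gamma>] g by simp
    also have "\<dots> \<le> \<gamma> * (D / (1 - \<delta>))" using aD g d by (simp add: divide_right_mono mult_left_mono)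
    finally show ?thesis by simp
  qed
  show "distM M zp (zeros T) \<le> (1 / (1 - \<delta>)) * (sqrt K + \<delta> * (min \<gamma> 1 / sqrt (\<alpha>^2 + 1) + 1)) * D"
    unfolding D_def[symmetric] K_def[symmetric]
  proof -
    have "distM M zp (zeros T) \<le> normM M (m - zp)" by (rule dle7[OF mO])
    also have "\<dots> \<le> normM M (m - zh) + normM M (zh - zp)" by (rule ntri7)
    also have "normM M (zh - zp) = \<gamma> * normM M (w - J)"
    proof -
      have "zh - zp = \<gamma> *\<^sub>R (J - w)" unfolding zh_def zp by (simp add: algebra_simps)
      then show ?thesis using g ncom7[of J w] by (simp add: nscale7)
    qed
    also have "\<gamma> * normM M (w - J) \<le> \<gamma> * (\<delta> * (a / (1 - \<delta>)))"
    proof -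
      have "normM M (w - J) \<le> \<delta> * (a / (1 - \<delta>))" using wJ wz d by (meson mult_left_mono order_trans)
      then show ?thesis using g by (intro mult_left_mono) auto
    qed
    also have "\<dots> \<le> \<gamma> * (\<delta> * (D / (1 - \<delta>)))" using aD g d
      by (intro mult_left_mono divide_right_mono) auto
    finally have "distM M zp (zeros T) \<le> sqrt K * D + \<gamma> * \<delta> / (1 - \<delta>) * D"
      using zhm ncom7[of m zh] by simp
    also have "\<dots> = (sqrt K + \<gamma> * \<delta> / (1 - \<delta>)) * D" by (simp add: algebra_simps)
    also have "\<dots> \<le> (1 / (1 - \<delta>)) * (sqrt K + \<delta> * (min \<gamma> 1 / sqrt (\<alpha>^2 + 1) + 1)) * D"
      using mult_right_mono[OF RL3[OF g d al] D0] unfolding K_def by simp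
    finally show ?thesis .
  qed
  show "\<gamma> * (1 - sqrt (1 / (\<alpha>^2 + 1))) * D / (1 + \<delta>) \<le> normM M (zp - z)"
    unfolding D_def[symmetric]
  proof -
    have "b^2 \<le> D^2 * (1 / (\<alpha>^2 + 1))" using bD by (simp add: field_simps add_pos_nonneg add.commute)
    then have "b \<le> sqrt (D^2 * (1 / (\<alpha>^2 + 1)))" by (rule real_le_rsqrt)
    also have "sqrt (D^2 * (1 / (\<alpha>^2 + 1))) = D * sqrt (1 / (\<alpha>^2 + 1))"
      unfolding real_sqrt_mult using D0 by simp
    finally have bt: "b \<le> D * sqrt (1 / (\<alpha>^2 + 1))" .
    have "D \<le> normM M (q - z)" unfolding D_def by (rule dle7[OF q(1)])
    also have "\<dots> \<le> normM M (q - J) + normM M (J - z)" by (rule ntri7)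
    also have "\<dots> = b + a" using q(2) ncom7[of J z] unfolding a_def by simp
    finally have "D * (1 - sqrt (1 / (\<alpha>^2 + 1))) \<le> a" using bt by (simp add: algebra_simps)
    also have "a \<le> (1 + \<delta>) * normM M (w - z)"
    proof -
      have "a \<le> normM M (z - w) + normM M (w - J)" unfolding a_def by (rule ntri7)
      then show ?thesis using wJ ncom7[of z w] by (simp add: algebra_simps)
    qed
    finally have "(1 - sqrt (1 / (\<alpha>^2 + 1))) * D / (1 + \<delta>) \<le> normM M (w - z)"
      using d by (simp add: field_simps)
    then have "\<gamma> * ((1 - sqrt (1 / (\<alpha>^2 + 1))) * D / (1 + \<delta>)) \<le> \<gamma> * normM M (w - z)"
      using g by (intro mult_left_mono) auto
    then show ?thesis unfolding zpz by (simp add: algebra_simps)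
  qed
qed

end

theorem corollary3:
  fixes T :: "'a::euclidean_space \<Rightarrow> 'a set" and M :: "'a \<Rightarrow> 'a"
    and z :: "nat \<Rightarrow> 'a" and \<sigma> \<eta> :: "nat \<Rightarrow> real"
    and \<gamma> \<delta> r \<kappa> \<alpha> :: real and zbar0 :: 'a
  assumes T_mm: "maximal_monotone T"
    and Omega_ne: "zeros T \<noteq> {}"
    and M_sa: "self_adjoint M" and M_pd: "pos_def M" and M_max: "lambda_max M = 1"
    and T_bms: "bounded_metric_subregular T"
    and gamma: "0 < \<gamma>" "\<gamma> < 2"
    and delta: "0 \<le> \<delta>" "\<delta> < 1/2"
    and sigma_nn: "\<And>k. 0 \<le> \<sigma> k" and eta_nn: "\<And>k. 0 \<le> \<eta> k"
    and eta_sum: "summable \<eta>"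
    and sigma_inf: "0 < (INF k. \<sigma> k)"
    and step: "\<And>k. IGPPAstep_out T (z (Suc k)) (z k) (\<sigma> k) (\<eta> k) \<delta> \<gamma> M"
    and zbar0: "zbar0 \<in> zeros T" "\<And>d. d \<in> zeros T \<Longrightarrow> normM M (zbar0 - z 0) \<le> normM M (d - z 0)"
    and r: "r \<ge> norm zbar0 + (1 / lambda_min M) * (distM M (z 0) (zeros T) + \<gamma> * (\<Sum>k. \<eta> k))"
    and kappa: "subreg_const T r \<kappa>"
    and alpha: "0 < \<alpha>"
    and rho: "(1 / (1 - \<delta>)) * (sqrt (1 - min \<gamma> (2*\<gamma> - \<gamma>^2) * \<alpha>^2 / (\<alpha>^2 + 1))
               + \<delta> * (min \<gamma> 1 / sqrt (\<alpha>^2 + 1) + 1)) < 1"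
    and sigma_ge: "\<And>k. \<sigma> k \<ge> \<kappa> * \<alpha>"
  shows "\<forall>k. normM M (z (Suc k) - z k) \<le>
    (let \<rho> = (1 / (1 - \<delta>)) * (sqrt (1 - min \<gamma> (2*\<gamma> - \<gamma>^2) * \<alpha>^2 / (\<alpha>^2 + 1))
               + \<delta> * (min \<gamma> 1 / sqrt (\<alpha>^2 + 1) + 1));
         C = (1 + \<delta>) / ((1 - \<delta>) * (1 - sqrt (1 / (\<alpha>^2 + 1))))
     in C * Min ((\<lambda>j. \<rho> ^ (k - j) * normM M (z (Suc j) - z j)) ` {..k}))"
proof -
  define \<rho> where "\<rho> = (1 / (1 - \<delta>)) * (sqrt (1 - min \<gamma> (2*\<gamma> - \<gamma>^2) * \<alpha>^2 / (\<alpha>^2 + 1))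
               + \<delta> * (min \<gamma> 1 / sqrt (\<alpha>^2 + 1) + 1))"
  define t where "t = sqrt (1 / (\<alpha>^2 + 1))"
  define C where "C = (1 + \<delta>) / ((1 - \<delta>) * (1 - t))"
  define D where "D k = distM M (z k) (zeros T)" for k
  define J where "J k = resolvent (\<sigma> k) M T (z k)" for k
  have d1: "\<delta> < 1" using delta by simp
  have k0: "0 < \<kappa>" using kappa unfolding subreg_const_def by simp
  have spos: "0 < \<sigma> k" for k using sigma_ge[of k] k0 alpha by (smt (verit) mult_pos_pos)
  have "\<forall>k. \<exists>w. z (Suc k) = \<gamma> *\<^sub>R w + (1 - \<gamma>) *\<^sub>R z k \<and>
          normM M (w - resolvent (\<sigma> k) M T (z k)) \<le> min (\<eta> k) (\<delta> * normM M (w - z k))"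
    using step unfolding IGPPAstep_out_def by blast
  then obtain W where W: "\<And>k. z (Suc k) = \<gamma> *\<^sub>R W k + (1 - \<gamma>) *\<^sub>R z k"
     "\<And>k. normM M (W k - J k) \<le> min (\<eta> k) (\<delta> * normM M (W k - z k))"
    unfolding J_def by metis
  have lmin: "0 < lambda_min M" by (rule lmin_props(1)[OF M_sa M_pd])
  have lmin1: "lambda_min M \<le> 1" using lmin_props(2)[OF M_sa M_pd] M_max by simp
  have D0eq: "normM M (z 0 - zbar0) = distM M (z 0) (zeros T)"
    using distM_eq[OF M_sa M_pd T_mm Omega_ne M_max zbar0(1)] zbar0(2) normM_commute[OF M_sa M_pd]
    by metis
  have bnd: "normM M (z k - zbar0) \<le> distM M (z 0) (zeros T) + \<gamma> * (\<Sum>i<k. \<eta> i)" for k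
  proof (induction k)
    case 0 then show ?case using D0eq by simp
  next
    case (Suc k)
    define zh where "zh = z k + \<gamma> *\<^sub>R (J k - z k)"
    have "normM M (z (Suc k) - zbar0) \<le> normM M (z (Suc k) - zh) + normM M (zh - zbar0)"
      by (rule normM_triangle_diff[OF M_sa M_pd])
    also have "normM M (zh - zbar0) \<le> normM M (z k - zbar0)"
      unfolding zh_def by (rule fejer[OF M_sa M_pd T_mm Omega_ne M_max spos J_def zbar0(1) gamma])
    also have "normM M (z (Suc k) - zh) = \<gamma> * normM M (W k - J k)"
    proof -
      have "z (Suc k) - zh = \<gamma> *\<^sub>R (W k - J k)" unfolding W(1) zh_def by (simp add: algebra_simps)
      then show ?thesis using gamma by (simp add: normM_scale[OF M_sa M_pd])
    qed
    also have "\<gamma> * normM M (W k - J k) \<le> \<gamma> * \<eta> k" using W(2)[of k] gamma by (intro mult_left_mono) auto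
    finally show ?case using Suc.IH by (simp add: algebra_simps)
  qed
  have Jr: "norm (J k) \<le> r" for k
  proof -
    define B where "B = distM M (z 0) (zeros T) + \<gamma> * (\<Sum>k. \<eta> k)"
    have B0: "0 \<le> B" unfolding B_def using distM_nonneg[OF M_sa M_pd T_mm Omega_ne M_max, of "z 0"]
        suminf_nonneg[OF eta_sum eta_nn] gamma by simp
    have "(\<Sum>i<k. \<eta> i) \<le> (\<Sum>k. \<eta> k)" by (rule sum_le_suminf[OF eta_sum]) (auto simp: eta_nn)
    then have "\<gamma> * (\<Sum>i<k. \<eta> i) \<le> \<gamma> * (\<Sum>k. \<eta> k)" using gamma by (intro mult_left_mono) auto
    then have zb: "normM M (z k - zbar0) \<le> B" using bnd[of k] unfolding B_def by linarith
    have "(normM M (z k - J k))^2 + (normM M (J k - zbar0))^2 \<le> (normM M (z k - zbar0))^2"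
      by (rule F1[OF M_sa M_pd T_mm Omega_ne M_max spos J_def zbar0(1)])
    then have "(normM M (J k - zbar0))^2 \<le> (normM M (z k - zbar0))^2" by (smt (verit) zero_le_power2)
    then have "normM M (J k - zbar0) \<le> normM M (z k - zbar0)"
      using normM_nonneg[OF M_sa M_pd] by (meson power2_le_imp_le)
    then have JB: "normM M (J k - zbar0) \<le> B" using zb by linarith
    have "sqrt (lambda_min M) * norm (J k - zbar0) \<le> B"
      using norm_le_normM[OF M_sa M_pd T_mm Omega_ne M_max, of "J k - zbar0"] JB by linarith
    then have "norm (J k - zbar0) \<le> B / sqrt (lambda_min M)" using lmin by (simp add: field_simps)
    also have "\<dots> \<le> B / lambda_min M"
    proof (rule divide_left_mono[OF _ B0])
      have "lambda_min M = sqrt ((lambda_min M)^2)" using lmin by simp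
      also have "\<dots> \<le> sqrt (lambda_min M)"
        using lmin lmin1 by (intro real_sqrt_le_mono) (simp add: power2_eq_square mult_le_one)
      finally show "lambda_min M \<le> sqrt (lambda_min M)" .
      show "0 < sqrt (lambda_min M) * lambda_min M" using lmin by simp
    qed
    finally have "norm (J k - zbar0) \<le> B / lambda_min M" .
    moreover have "norm (J k) \<le> norm zbar0 + norm (J k - zbar0)" by (metis norm_triangle_sub add.commute)
    moreover have "norm zbar0 + B / lambda_min M \<le> r" using r unfolding B_def by simp
    ultimately show ?thesis by linarith
  qed
  have os: "D (Suc k) \<le> \<rho> * D k \<and> normM M (z (Suc k) - z k) \<le> \<gamma> * D k / (1 - \<delta>) \<and>
      \<gamma> * (1 - t) * D k / (1 + \<delta>) \<le> normM M (z (Suc k) - z k)" for k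
  proof -
    have wJ: "normM M (W k - J k) \<le> \<delta> * normM M (W k - z k)" using W(2)[of k] by simp
    note o = one_step[OF M_sa M_pd T_mm Omega_ne M_max spos J_def W(1) wJ gamma delta(1) d1 alpha kappa Jr sigma_ge]
    show ?thesis using o unfolding D_def \<rho>_def t_def by (simp add: mult.commute mult.left_commute mult.assoc)
  qed
  have rho0: "0 \<le> \<rho>"
  proof -
    have "0 \<le> sqrt (1 - min \<gamma> (2*\<gamma> - \<gamma>^2) * \<alpha>^2 / (\<alpha>^2 + 1))" using RL0[OF gamma, of \<alpha>] by simp
    moreover have "0 \<le> \<delta> * (min \<gamma> 1 / sqrt (\<alpha>^2 + 1) + 1)" using delta gamma by simp
    ultimately show ?thesis unfolding \<rho>_def using d1 by simp
  qed
  have geo: "D k \<le> \<rho> ^ (k - j) * D j" if "j \<le> k" for j k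
    using that
  proof (induction k rule: dec_induct)
    case base then show ?case by simp
  next
    case (step k)
    have "D (Suc k) \<le> \<rho> * D k" using os by blast
    also have "\<dots> \<le> \<rho> * (\<rho> ^ (k - j) * D j)" using step.IH rho0 by (rule mult_left_mono)
    also have "\<dots> = \<rho> ^ (Suc k - j) * D j" using step.hyps by (simp add: Suc_diff_le)
    finally show ?case .
  qed
  have t1: "t < 1"
  proof -
    have "1 / (\<alpha>^2 + 1) < 1" using alpha by (simp add: add_pos_nonneg)
    then show ?thesis unfolding t_def by (metis real_sqrt_less_iff real_sqrt_one)
  qed
  have main: "normM M (z (Suc k) - z k) \<le> C * (\<rho> ^ (k - j) * normM M (z (Suc j) - z j))" if "j \<le> k" for j k
  proof -
    define N where "N = normM M (z (Suc j) - z j)"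
    have D0: "0 \<le> D j" unfolding D_def by (rule distM_nonneg[OF M_sa M_pd T_mm Omega_ne M_max])
    have lo: "\<gamma> * (1 - t) * D j / (1 + \<delta>) \<le> N" unfolding N_def using os by blast
    then have Dj: "D j \<le> (1 + \<delta>) * N / (\<gamma> * (1 - t))" using gamma t1 delta by (simp add: field_simps)
    have "normM M (z (Suc k) - z k) \<le> \<gamma> * D k / (1 - \<delta>)" using os by blast
    also have "\<dots> \<le> \<gamma> * (\<rho> ^ (k - j) * D j) / (1 - \<delta>)"
      using geo[OF that] gamma d1 by (intro divide_right_mono mult_left_mono) auto
    also have "\<dots> \<le> \<gamma> * (\<rho> ^ (k - j) * ((1 + \<delta>) * N / (\<gamma> * (1 - t)))) / (1 - \<delta>)"
      using Dj gamma d1 rho0 by (intro divide_right_mono mult_left_mono) auto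
    also have "\<dots> = C * (\<rho> ^ (k - j) * N)"
    proof -
      have a1: "1 - t \<noteq> 0" "1 - \<delta> \<noteq> 0" "\<gamma> \<noteq> 0" using t1 d1 gamma by auto
      define P where "P = \<rho> ^ (k - j)"
      show ?thesis unfolding C_def P_def[symmetric] using a1 by (simp add: divide_simps)
    qed
    finally show ?thesis unfolding N_def .
  qed
  show ?thesis
  proof
    fix k
    define f where "f j = \<rho> ^ (k - j) * normM M (z (Suc j) - z j)" for j
    have "Min (f ` {..k}) \<in> f ` {..k}" by (rule Min_in) auto
    then obtain j where j: "j \<le> k" "Min (f ` {..k}) = f j" by (metis atMost_iff imageE)
    have "normM M (z (Suc k) - z k) \<le> C * Min (f ` {..k})" unfolding j(2) f_def by (rule main[OF j(1)])
    then show "normM M (z (Suc k) - z k) \<le>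
    (let \<rho> = (1 / (1 - \<delta>)) * (sqrt (1 - min \<gamma> (2*\<gamma> - \<gamma>^2) * \<alpha>^2 / (\<alpha>^2 + 1))
               + \<delta> * (min \<gamma> 1 / sqrt (\<alpha>^2 + 1) + 1));
         C = (1 + \<delta>) / ((1 - \<delta>) * (1 - sqrt (1 / (\<alpha>^2 + 1))))
     in C * Min ((\<lambda>j. \<rho> ^ (k - j) * normM M (z (Suc j) - z j)) ` {..k}))"
      unfolding Let_def f_def \<rho>_def C_def t_def .
  qed
qed


end
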